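(* Let $1\le r\le s\le t$ and let $u=ABCd$, $v=A'B'C'd'$ be vertices of $E3C(r,s,t)$ with $A\ne A'$, $B=B'$, $C\ne C'$ and $d\ne d'$. Then there exist $2r+2$ pairwise internally disjoint $u$–$v$ paths in $E3C(r,s,t)$, each of length at most $r+t+7$.
   Context: The exchanged 3-ary $n$-cube $E3C(r,s,t)$ ($r,s,t\ge1$, $n=r+s+t+1$): vertices are strings written $x=ABCd$ with $A\in\{0,1,2\}^r$, $B\in\{0,1,2\}^s$, $C\in\{0,1,2\}^t$, $d\in\{0,1,2\}$. Two distinct vertices $x=ABCd$, $y=A'B'C'd'$ are adjacent iff one of: (E0) $A=A',B=B',C=C'$ and $d\ne d'$; (E1) $d=d'=0$, $A=A'$, $B=B'$ and $C,C'$ differ in exactly one position; (E2) $d=d'=1$, $A=A'$, $C=C'$ and $B,B'$ differ in exactly one position; (E3) $d=d'=2$, $B=B'$, $C=C'$ and $A,A'$ differ in exactly one position. Paths are internally disjoint if they share no vertices other than their endpoints; length = number of edges. *)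

theory Defs
  imports Main
begin

type_synonym e3c_vertex = "nat list \<times> nat list \<times> nat list \<times> nat"

definition ternary_word :: "nat \<Rightarrow> nat list \<Rightarrow> bool" where
  "ternary_word k X \<longleftrightarrow> length X = k \<and> set X \<subseteq> {0,1,2}"

definition e3c_verts :: "nat \<Rightarrow> nat \<Rightarrow> nat \<Rightarrow> e3c_vertex set" where
  "e3c_verts r s t = {(A,B,C,d). ternary_word r A \<and> ternary_word s B \<and> ternary_word t C \<and> d \<in> {0,1,2}}"

definition differ_one :: "nat list \<Rightarrow> nat list \<Rightarrow> bool" where
  "differ_one X Y \<longleftrightarrow> length X = length Y \<and> card {i. i < length X \<and> X ! i \<noteq> Y ! i} = 1"

definition e3c_adj :: "nat \<Rightarrow> nat \<Rightarrow> nat \<Rightarrow> e3c_vertex \<Rightarrow> e3c_vertex \<Rightarrow> bool" where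
  "e3c_adj r s t x y \<longleftrightarrow> x \<in> e3c_verts r s t \<and> y \<in> e3c_verts r s t \<and> x \<noteq> y \<and>
     (case x of (A,B,C,d) \<Rightarrow> case y of (A',B',C',d') \<Rightarrow>
        (A = A' \<and> B = B' \<and> C = C' \<and> d \<noteq> d') \<or>
        (d = 0 \<and> d' = 0 \<and> A = A' \<and> B = B' \<and> differ_one C C') \<or>
        (d = 1 \<and> d' = 1 \<and> A = A' \<and> C = C' \<and> differ_one B B') \<or>
        (d = 2 \<and> d' = 2 \<and> B = B' \<and> C = C' \<and> differ_one A A'))"

definition e3c_path :: "nat \<Rightarrow> nat \<Rightarrow> nat \<Rightarrow> e3c_vertex \<Rightarrow> e3c_vertex \<Rightarrow> e3c_vertex list \<Rightarrow> bool" where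
  "e3c_path r s t u v P \<longleftrightarrow> P \<noteq> [] \<and> hd P = u \<and> last P = v \<and> distinct P \<and>
     set P \<subseteq> e3c_verts r s t \<and>
     (\<forall>i. Suc i < length P \<longrightarrow> e3c_adj r s t (P ! i) (P ! Suc i))"

definition path_len :: "'a list \<Rightarrow> nat" where
  "path_len P = length P - 1"

definition interior :: "'a list \<Rightarrow> 'a set" where
  "interior P = set (butlast (tl P))"

end

theory Submission
  imports Defs
begin


definition ham :: "nat list \<Rightarrow> nat list \<Rightarrow> nat" where
  "ham X Y = card {i. i < length X \<and> X ! i \<noteq> Y ! i}"

lemma ham_set_Cons:
  "{i. i < length (x#X) \<and> (x#X) ! i \<noteq> (y#Y) ! i} =
   (if x \<noteq> y then {0} else {}) \<union> Suc ` {i. i < length X \<and> X ! i \<noteq> Y ! i}"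
  (is "?L = ?R")
proof
  show "?L \<subseteq> ?R"
  proof
    fix i assume "i \<in> ?L"
    then show "i \<in> ?R" by (cases i) auto
  qed
qed (auto split: if_splits)

lemma ham_Cons: "ham (x#X) (y#Y) = (if x \<noteq> y then 1 else 0) + ham X Y"
  unfolding ham_def ham_set_Cons
  by (auto simp: card_image)

lemma ham_0: "length X = length Y \<Longrightarrow> ham X Y = 0 \<longleftrightarrow> X = Y"
proof -
  assume len: "length X = length Y"
  have fin: "finite {i. i < length X \<and> X ! i \<noteq> Y ! i}" by simp
  have "ham X Y = 0 \<longleftrightarrow> {i. i < length X \<and> X ! i \<noteq> Y ! i} = {}"
    unfolding ham_def card_eq_0_iff using fin by simp
  also have "\<dots> \<longleftrightarrow> (\<forall>i<length X. X ! i = Y ! i)" by blast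
  also have "\<dots> \<longleftrightarrow> X = Y" using len by (simp add: list_eq_iff_nth_eq)
  finally show ?thesis .
qed

lemma differ_one_ham: "differ_one X Y \<longleftrightarrow> length X = length Y \<and> ham X Y = 1"
  by (simp add: differ_one_def ham_def)

lemma differ_one_Cons:
  "length X = length Y \<Longrightarrow> differ_one (x#X) (y#Y) \<longleftrightarrow> (x = y \<and> differ_one X Y) \<or> (x \<noteq> y \<and> X = Y)"
  by (auto simp: differ_one_ham ham_Cons ham_0)

lemma differ_one_sym: "differ_one X Y \<Longrightarrow> differ_one Y X"
proof -
  assume d: "differ_one X Y"
  then have len: "length X = length Y" by (simp add: differ_one_def)
  have e: "{i. i < length Y \<and> Y ! i \<noteq> X ! i} = {i. i < length X \<and> X ! i \<noteq> Y ! i}"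
    using len by (intro Collect_cong) (simp add: eq_commute)
  show ?thesis using d len unfolding differ_one_def e by simp
qed

lemma differ_one_neq: "differ_one X Y \<Longrightarrow> X \<noteq> Y"
  unfolding differ_one_def by auto

fun fp :: "nat list \<Rightarrow> nat list \<Rightarrow> nat list list" where
  "fp (x#xs) (y#ys) = (if x = y then map (Cons x) (fp xs ys) else (x#xs) # map (Cons y) (fp xs ys))"
| "fp xs ys = [xs]"

lemma fp_ne [simp]: "fp X Y \<noteq> []"
  by (induction X Y rule: fp.induct) auto

lemma fp_hd [simp]: "hd (fp X Y) = X"
  by (induction X Y rule: fp.induct) (auto simp: hd_map)

lemma fp_last [simp]: "length X = length Y \<Longrightarrow> last (fp X Y) = Y"
  by (induction X Y rule: fp.induct) (auto simp: last_map)

lemma fp_len: "length (fp X Y) \<le> length X + 1"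
  by (induction X Y rule: fp.induct) auto

lemma fp_distinct: "distinct (fp X Y)"
  by (induction X Y rule: fp.induct) (auto simp: distinct_map)

lemma fp_set: "length X = length Y \<Longrightarrow> Z \<in> set (fp X Y) \<Longrightarrow> \<exists>m. Z = take m Y @ drop m X"
proof (induction X Y arbitrary: Z rule: fp.induct)
  case (1 x xs y ys)
  show ?case
  proof (cases "Z = x#xs")
    case True then show ?thesis by (rule_tac x=0 in exI) simp
  next
    case False
    then obtain W where W: "Z = (if x = y then x else y) # W" "W \<in> set (fp xs ys)"
      using "1.prems"(2) by (cases "x = y") auto
    then obtain m where "W = take m ys @ drop m xs" using 1 by (cases "x = y") auto
    then show ?thesis using W by (rule_tac x="Suc m" in exI) (auto split: if_splits)
  qed
qed auto

lemma fp_set_len: "length X = length Y \<Longrightarrow> Z \<in> set (fp X Y) \<Longrightarrow> length Z = length X"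
  using fp_set by fastforce

lemma fp_set_nth: "length X = length Y \<Longrightarrow> Z \<in> set (fp X Y) \<Longrightarrow> i < length X \<Longrightarrow> Z ! i = X ! i \<or> Z ! i = Y ! i"
  using fp_set by (fastforce simp: nth_append)

lemma fp_tern: "ternary_word n X \<Longrightarrow> ternary_word n Y \<Longrightarrow> Z \<in> set (fp X Y) \<Longrightarrow> ternary_word n Z"
  unfolding ternary_word_def
  by (smt (verit, ccfv_threshold) fp_set_len fp_set_nth in_set_conv_nth subset_iff)

lemma differ_one_Cons_same: "differ_one a b \<Longrightarrow> differ_one (y#a) (y#b)"
proof -
  assume d: "differ_one a b"
  then have "length a = length b" by (simp add: differ_one_def)
  then show ?thesis using differ_one_Cons[of a b y y] d by simp
qed

lemma succ_map_Cons: "successively differ_one L \<Longrightarrow> successively differ_one (map (Cons y) L)"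
  unfolding successively_map by (erule successively_mono) (rule differ_one_Cons_same)

lemma fp_succ: "length X = length Y \<Longrightarrow> successively differ_one (fp X Y)"
proof (induction X Y rule: fp.induct)
  case (1 x xs y ys)
  have len: "length xs = length ys" using 1 by simp
  have IH: "successively differ_one (fp xs ys)" using 1 len by (cases "x = y") auto
  show ?case
  proof (cases "x = y")
    case True
    then show ?thesis using succ_map_Cons[OF IH] by simp
  next
    case False
    have d: "differ_one (x#xs) (y#xs)" using False differ_one_Cons[of xs xs x y] by simp
    have "hd (map (Cons y) (fp xs ys)) = y#xs" by (simp add: hd_map)
    then show ?thesis using False succ_map_Cons[OF IH, of y] d
      by (simp add: successively_Cons)
  qed
qed auto

definition pert :: "nat list \<Rightarrow> nat \<Rightarrow> nat list" where
  "pert X m = X[m div 2 := (X ! (m div 2) + m mod 2 + 1) mod 3]"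

lemma mod3_neq: "(x + m mod 2 + 1) mod 3 \<noteq> (x::nat)"
  by (cases "m mod 2 = 0") (auto, presburger+)

lemma pert_len [simp]: "length (pert X m) = length X"
  by (simp add: pert_def)

lemma pert_nth_same: "m div 2 < length X \<Longrightarrow> pert X m ! (m div 2) = (X ! (m div 2) + m mod 2 + 1) mod 3"
  by (simp add: pert_def)

lemma pert_nth_other: "i \<noteq> m div 2 \<Longrightarrow> pert X m ! i = X ! i"
  by (simp add: pert_def)

lemma pert_nth_neq: "m div 2 < length X \<Longrightarrow> pert X m ! (m div 2) \<noteq> X ! (m div 2)"
  using mod3_neq pert_nth_same by simp

lemma pert_tern: "ternary_word n X \<Longrightarrow> m < 2*n \<Longrightarrow> ternary_word n (pert X m)"
  unfolding ternary_word_def pert_def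
  by (auto dest!: subsetD[OF set_update_subset_insert])

lemma pert_differ: "m < 2 * length X \<Longrightarrow> differ_one X (pert X m)"
proof -
  assume m: "m < 2 * length X"
  have j: "m div 2 < length X" using m by linarith
  have "{i. i < length X \<and> X ! i \<noteq> pert X m ! i} = {m div 2}"
    using j pert_nth_neq[of m X] pert_nth_other[of _ m X] by (auto, metis)
  then show ?thesis unfolding differ_one_def by simp
qed

lemma pert_neq [simp]: "m < 2 * length X \<Longrightarrow> pert X m \<noteq> X"
  using pert_differ differ_one_neq by metis

lemma pert_neq' [simp]: "m < 2 * length X \<Longrightarrow> X \<noteq> pert X m"
  using pert_neq by metis

lemma mod3_inj: "(x + a mod 2 + 1) mod 3 = ((x::nat) + b mod 2 + 1) mod 3 \<Longrightarrow> a mod 2 = b mod 2"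
  by (cases "a mod 2 = 0"; cases "b mod 2 = 0") (auto, presburger+)

lemma pert_inj: "m < 2 * length X \<Longrightarrow> m' < 2 * length X \<Longrightarrow> pert X m = pert X m' \<longleftrightarrow> m = m'"
proof
  assume m: "m < 2 * length X" "m' < 2 * length X" and e: "pert X m = pert X m'"
  have jj: "m div 2 < length X" "m' div 2 < length X" using m by linarith+
  have j: "m div 2 = m' div 2"
  proof (rule ccontr)
    assume "m div 2 \<noteq> m' div 2"
    then have "pert X m' ! (m div 2) = X ! (m div 2)" by (simp add: pert_nth_other)
    then show False using e pert_nth_neq[of m X] jj by simp
  qed
  then have "(X ! (m div 2) + m mod 2 + 1) mod 3 = (X ! (m div 2) + m' mod 2 + 1) mod 3"
    using e jj pert_nth_same[of m X] pert_nth_same[of m' X] by simp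
  then have "m mod 2 = m' mod 2" by (rule mod3_inj)
  with j show "m = m'" by (metis div_mult_mod_eq)
qed simp

lemma pert_inj' [simp]: "m < 2 * length X \<Longrightarrow> m' < 2 * length X \<Longrightarrow> m \<noteq> m' \<Longrightarrow> pert X m \<noteq> pert X m'"
  using pert_inj by blast

lemma mod3_cases: "a < 3 \<Longrightarrow> b < 3 \<Longrightarrow> a \<noteq> (b::nat) \<Longrightarrow> b = (a + 0 + 1) mod 3 \<or> b = (a + 1 + 1) mod 3"
proof -
  assume "a < 3" "b < 3" "a \<noteq> b"
  then have "a = 0 \<or> a = 1 \<or> a = 2" "b = 0 \<or> b = 1 \<or> b = 2" by auto
  then show ?thesis using \<open>a \<noteq> b\<close> by auto
qed

lemma good_move:
  assumes "ternary_word n A" "ternary_word n A'" "A \<noteq> A'"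
  shows "\<exists>k < 2*n. pert A k ! (k div 2) = A' ! (k div 2) \<and> A ! (k div 2) \<noteq> A' ! (k div 2)"
proof -
  have len: "length A = n" "length A' = n" using assms unfolding ternary_word_def by auto
  have "\<exists>i<n. A ! i \<noteq> A' ! i"
  proof (rule ccontr)
    assume "\<not> (\<exists>i<n. A ! i \<noteq> A' ! i)"
    then have "A = A'" using len by (simp add: list_eq_iff_nth_eq)
    then show False using assms(3) by simp
  qed
  then obtain i where i: "i < n" "A ! i \<noteq> A' ! i" by blast
  have "A ! i \<in> set A" "A' ! i \<in> set A'" using i len by auto
  then have t: "A ! i < 3" "A' ! i < 3" using assms unfolding ternary_word_def by auto
  have "A' ! i = (A ! i + 0 + 1) mod 3 \<or> A' ! i = (A ! i + 1 + 1) mod 3"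
    using mod3_cases[OF t i(2)] .
  then obtain b where b: "b < (2::nat)" "A' ! i = (A ! i + b + 1) mod 3"
  proof (elim disjE)
    assume "A' ! i = (A ! i + 0 + 1) mod 3" then show ?thesis using that[of 0] by simp
  next
    assume "A' ! i = (A ! i + 1 + 1) mod 3" then show ?thesis using that[of 1] by simp
  qed
  define k where "k = 2*i + b"
  have kd: "k div 2 = i" "k mod 2 = b" using b by (auto simp: k_def)
  have k2: "k < 2*n" using b i by (simp add: k_def)
  have "pert A k ! (k div 2) = A' ! (k div 2)"
    using pert_nth_same[of k A] kd b len i by simp
  then show ?thesis using k2 kd i by blast
qed

lemma good_move_unique:
  assumes "length A = n" "k0 < 2*n" "pert A k0 ! (k0 div 2) = A' ! (k0 div 2)" "k < 2*n" "k \<noteq> k0"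
  shows "pert A k ! (k0 div 2) \<noteq> A' ! (k0 div 2)"
proof
  assume e: "pert A k ! (k0 div 2) = A' ! (k0 div 2)"
  have i0: "k0 div 2 < length A" "k div 2 < length A" using assms by linarith+
  show False
  proof (cases "k div 2 = k0 div 2")
    case True
    have "(A ! (k0 div 2) + k mod 2 + 1) mod 3 = (A ! (k0 div 2) + k0 mod 2 + 1) mod 3"
      using e assms(3) pert_nth_same[OF i0(1)] pert_nth_same[OF i0(2)] True by simp
    then have "k mod 2 = k0 mod 2" by (rule mod3_inj)
    then have "k = k0" using True by (metis div_mult_mod_eq)
    then show False using assms(5) by simp
  next
    case False
    then have "pert A k ! (k0 div 2) = A ! (k0 div 2)" by (simp add: pert_nth_other)
    then show False using e assms(3) pert_nth_neq[OF i0(1)] by simp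
  qed
qed

lemma fp_pert_pos:
  assumes "length X = length Y" "m < 2 * length Y" "pert Y m \<in> set (fp X Y)"
  shows "X ! (m div 2) = pert Y m ! (m div 2) \<and> (\<forall>i<length Y. i > m div 2 \<longrightarrow> X ! i = Y ! i)"
proof -
  obtain k where k: "pert Y m = take k Y @ drop k X" using fp_set assms by blast
  have nth: "pert Y m ! i = (if i < k then Y ! i else X ! i)" if "i < length Y" for i
  proof (cases "i < k")
    case True
    then show ?thesis using that by (simp add: k nth_append)
  next
    case False
    then have "length (take k Y) = k" "\<not> i < length (take k Y)" using that by auto
    then show ?thesis using False by (simp add: k nth_append assms(1))
  qed
  have j: "m div 2 < length Y" using assms(2) by linarith
  have nk: "\<not> m div 2 < k"
  proof
    assume "m div 2 < k"
    then have "pert Y m ! (m div 2) = Y ! (m div 2)" using nth[OF j] by simp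
    then show False using pert_nth_neq[OF j] by simp
  qed
  have a: "X ! (m div 2) = pert Y m ! (m div 2)" using nth[OF j] nk by simp
  have b: "X ! i = Y ! i" if "i < length Y" "i > m div 2" for i
  proof -
    have "pert Y m ! i = X ! i" using nth[OF that(1)] that(2) nk by simp
    moreover have "pert Y m ! i = Y ! i" using that(2) by (simp add: pert_nth_other)
    ultimately show ?thesis by simp
  qed
  show ?thesis using a b by blast
qed

lemma fp_pert_unique:
  assumes "length X = length Y" "m < 2 * length Y" "m' < 2 * length Y"
    "pert Y m \<in> set (fp X Y)" "pert Y m' \<in> set (fp X Y)"
  shows "m = m'"
proof -
  note a = fp_pert_pos[OF assms(1,2,4)] and b = fp_pert_pos[OF assms(1,3,5)]
  have jm: "m div 2 < length Y" "m' div 2 < length Y" using assms by linarith+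
  have "m div 2 = m' div 2"
  proof (rule ccontr)
    assume "m div 2 \<noteq> m' div 2"
    then consider "m div 2 < m' div 2" | "m' div 2 < m div 2" by linarith
    then show False
    proof cases
      case 1
      then have "X ! (m' div 2) = Y ! (m' div 2)" using a jm by blast
      then show ?thesis using b pert_nth_neq[OF jm(2)] by simp
    next
      case 2
      then have "X ! (m div 2) = Y ! (m div 2)" using b jm by blast
      then show ?thesis using a pert_nth_neq[OF jm(1)] by simp
    qed
  qed
  then have "(Y ! (m div 2) + m mod 2 + 1) mod 3 = (Y ! (m div 2) + m' mod 2 + 1) mod 3"
    using a b jm pert_nth_same[of m Y] pert_nth_same[of m' Y] by simp
  then have "m mod 2 = m' mod 2" by (rule mod3_inj)
  with \<open>m div 2 = m' div 2\<close> show ?thesis by (metis div_mult_mod_eq)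
qed



lemma mem_V: "(X,Y,Z,l) \<in> e3c_verts r s t \<longleftrightarrow> ternary_word r X \<and> ternary_word s Y \<and> ternary_word t Z \<and> l \<in> {0,1,2}"
  by (simp add: e3c_verts_def)

lemma e3c_adj_sym: "e3c_adj r s t x y \<Longrightarrow> e3c_adj r s t y x"
  unfolding e3c_adj_def by (auto split: prod.splits dest: differ_one_sym)

lemma adj_lvl: "(X,Y,Z,l) \<in> e3c_verts r s t \<Longrightarrow> l' \<in> {0,1,2} \<Longrightarrow> l \<noteq> l' \<Longrightarrow>
  e3c_adj r s t (X,Y,Z,l) (X,Y,Z,l')"
  unfolding e3c_adj_def by (simp add: mem_V)

lemma adj_A: "(X,Y,Z,2) \<in> e3c_verts r s t \<Longrightarrow> (X',Y,Z,2) \<in> e3c_verts r s t \<Longrightarrow> differ_one X X' \<Longrightarrow>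
  e3c_adj r s t (X,Y,Z,2) (X',Y,Z,2)"
  unfolding e3c_adj_def using differ_one_neq by simp

lemma adj_B: "(X,Y,Z,1) \<in> e3c_verts r s t \<Longrightarrow> (X,Y',Z,1) \<in> e3c_verts r s t \<Longrightarrow> differ_one Y Y' \<Longrightarrow>
  e3c_adj r s t (X,Y,Z,1) (X,Y',Z,1)"
  unfolding e3c_adj_def using differ_one_neq by simp

lemma adj_C: "(X,Y,Z,0) \<in> e3c_verts r s t \<Longrightarrow> (X,Y,Z',0) \<in> e3c_verts r s t \<Longrightarrow> differ_one Z Z' \<Longrightarrow>
  e3c_adj r s t (X,Y,Z,0) (X,Y,Z',0)"
  unfolding e3c_adj_def using differ_one_neq by simp

lemma tw_len: "ternary_word n X \<Longrightarrow> length X = n"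
  by (simp add: ternary_word_def)

lemma succ_map_adj:
  "successively differ_one L \<Longrightarrow> (\<forall>x\<in>set L. P x) \<Longrightarrow>
   (\<And>x y. P x \<Longrightarrow> P y \<Longrightarrow> differ_one x y \<Longrightarrow> R (f x) (f y)) \<Longrightarrow> successively R (map f L)"
  by (induction L rule: induct_list012) auto

lemma segA:
  assumes "ternary_word r X0" "ternary_word r X1" "ternary_word s Y" "ternary_word t Z"
  shows "successively (e3c_adj r s t) (map (\<lambda>X. (X,Y,Z,2)) (fp X0 X1))"
proof -
  have len: "length X0 = length X1" using assms by (simp add: tw_len)
  show ?thesis
    by (rule succ_map_adj[OF fp_succ[OF len], where P="ternary_word r"])
       (auto intro!: adj_A simp: mem_V assms fp_tern[OF assms(1,2)])
qed

lemma segC: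
  assumes "ternary_word t Z0" "ternary_word t Z1" "ternary_word r X" "ternary_word s Y"
  shows "successively (e3c_adj r s t) (map (\<lambda>Z. (X,Y,Z,0)) (fp Z0 Z1))"
proof -
  have len: "length Z0 = length Z1" using assms by (simp add: tw_len)
  show ?thesis
    by (rule succ_map_adj[OF fp_succ[OF len], where P="ternary_word t"])
       (auto intro!: adj_C simp: mem_V assms fp_tern[OF assms(1,2)])
qed

definition good_fam where
  "good_fam r s t u v P \<longleftrightarrow>
     (\<forall>i < 2*r+2. e3c_path r s t u v (P i) \<and> path_len (P i) \<le> r + t + 7) \<and>
     (\<forall>i < 2*r+2. \<forall>j < 2*r+2. i \<noteq> j \<longrightarrow> interior (P i) \<inter> interior (P j) = {} \<and> P i \<noteq> P j)"

lemma interior_rev: "interior (rev P) = interior P"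
proof -
  have "tl (rev P) = rev (butlast P)" by (metis butlast_rev rev_rev_ident)
  then show ?thesis unfolding interior_def by (simp add: butlast_tl)
qed

lemma path_rev: "e3c_path r s t u v P \<Longrightarrow> e3c_path r s t v u (rev P)"
proof -
  assume p: "e3c_path r s t u v P"
  then have "successively (e3c_adj r s t) P" unfolding e3c_path_def successively_conv_nth by blast
  then have "successively (\<lambda>x y. e3c_adj r s t y x) P" by (rule successively_mono) (rule e3c_adj_sym)
  then have "successively (e3c_adj r s t) (rev P)" by simp
  then show ?thesis using p unfolding e3c_path_def successively_conv_nth by (simp add: hd_rev last_rev)
qed

lemma good_fam_rev: "good_fam r s t u v P \<Longrightarrow> good_fam r s t v u (\<lambda>i. rev (P i))"
  unfolding good_fam_def by (auto simp: path_rev interior_rev path_len_def)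

lemma build:
  assumes "u \<in> e3c_verts r s t" "v \<in> e3c_verts r s t" "u \<noteq> v"
    and "\<And>k. k < 2*r+2 \<Longrightarrow> M k \<noteq> [] \<and> distinct (M k) \<and> u \<notin> set (M k) \<and> v \<notin> set (M k) \<and>
          set (M k) \<subseteq> e3c_verts r s t \<and> e3c_adj r s t u (hd (M k)) \<and> e3c_adj r s t (last (M k)) v \<and>
          successively (e3c_adj r s t) (M k) \<and> length (M k) \<le> r + t + 6"
    and "\<And>k l. k < 2*r+2 \<Longrightarrow> l < 2*r+2 \<Longrightarrow> k \<noteq> l \<Longrightarrow> set (M k) \<inter> set (M l) = {}"
  shows "good_fam r s t u v (\<lambda>k. u # M k @ [v])"
proof -
  have int: "interior (u # M k @ [v]) = set (M k)" for k
    unfolding interior_def by simp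
  have path: "e3c_path r s t u v (u # M k @ [v])" if k: "k < 2*r+2" for k
  proof -
    note a = assms(4)[OF k]
    have "successively (e3c_adj r s t) (u # M k @ [v])"
      using a by (auto simp: successively_Cons successively_append_iff)
    then show ?thesis unfolding e3c_path_def successively_conv_nth[symmetric]
      using a assms(1-3) by auto
  qed
  show ?thesis unfolding good_fam_def int
  proof (intro conjI allI impI)
    fix i assume i: "i < 2*r+2"
    show "e3c_path r s t u v (u # M i @ [v])" using path[OF i] .
    show "path_len (u # M i @ [v]) \<le> r + t + 7" using assms(4)[OF i] by (simp add: path_len_def)
  next
    fix i j assume i: "i < 2*r+2" and j: "j < 2*r+2" and ij: "i \<noteq> j"
    show "set (M i) \<inter> set (M j) = {}" using assms(5)[OF i j ij] .
    then show "u # M i @ [v] \<noteq> u # M j @ [v]" using assms(4)[OF i] by auto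
  qed
qed



lemma fp_butlast:
  assumes "length C = length C'" "C \<noteq> C'"
  shows "butlast (fp C C') \<noteq> []" "hd (butlast (fp C C')) = C"
    "differ_one (last (butlast (fp C C'))) C'" "successively differ_one (butlast (fp C C'))"
    "C' \<notin> set (butlast (fp C C'))" "distinct (butlast (fp C C'))"
proof -
  let ?L = "fp C C'"
  have L: "?L = butlast ?L @ [C']" using append_butlast_last_id[OF fp_ne] fp_last[OF assms(1)] by metis
  show ne: "butlast ?L \<noteq> []"
  proof
    assume "butlast ?L = []"
    then have "?L = [C']" using L by simp
    then have "hd ?L = C'" by simp
    then show False using assms(2) by simp
  qed
  show "hd (butlast ?L) = C" using ne L fp_hd[of C C'] by (metis hd_append)
  have s: "successively differ_one (butlast ?L @ [C'])" using fp_succ[OF assms(1)] L by metis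
  then show "differ_one (last (butlast ?L)) C'" "successively differ_one (butlast ?L)"
    using ne by (auto simp: successively_append_iff)
  have "distinct (butlast ?L @ [C'])" using fp_distinct L by metis
  then show "C' \<notin> set (butlast ?L)" "distinct (butlast ?L)" by auto
qed

lemma segC':
  assumes "ternary_word t Z0" "ternary_word t Z1" "ternary_word r X" "ternary_word s Y" "Z0 \<noteq> Z1"
  shows "successively (e3c_adj r s t) (map (\<lambda>Z. (X,Y,Z,0)) (butlast (fp Z0 Z1)))"
proof -
  have len: "length Z0 = length Z1" using assms by (simp add: tw_len)
  show ?thesis
    by (rule succ_map_adj[OF fp_butlast(4)[OF len assms(5)], where P="ternary_word t"])
       (auto intro!: adj_C simp: mem_V assms dest: in_set_butlastD intro: fp_tern[OF assms(1,2)])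
qed

lemma fp_len': "ternary_word n X \<Longrightarrow> length (fp X Y) \<le> n + 1"
  using fp_len tw_len by metis

definition okM where
  "okM r s t u v L \<longleftrightarrow> L \<noteq> [] \<and> distinct L \<and> u \<notin> set L \<and> v \<notin> set L \<and>
          set L \<subseteq> e3c_verts r s t \<and> e3c_adj r s t u (hd L) \<and> e3c_adj r s t (last L) v \<and>
          successively (e3c_adj r s t) L \<and> length L \<le> r + t + 6"

lemma build2:
  assumes "u \<in> e3c_verts r s t" "v \<in> e3c_verts r s t" "u \<noteq> v"
    and "\<And>k. k < 2*r+2 \<Longrightarrow> okM r s t u v (M k)"
    and "\<And>k l. k < 2*r+2 \<Longrightarrow> l < 2*r+2 \<Longrightarrow> k < l \<Longrightarrow> set (M k) \<inter> set (M l) = {}"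
  shows "\<exists>P. good_fam r s t u v P"
proof -
  have d: "set (M k) \<inter> set (M l) = {}" if "k < 2*r+2" "l < 2*r+2" "k \<noteq> l" for k l
  proof (cases "k < l")
    case True then show ?thesis using assms(5) that by blast
  next
    case False then have "l < k" using that by simp
    then show ?thesis using assms(5)[of l k] that by blast
  qed
  have ok: "\<And>k. k < 2*r+2 \<Longrightarrow> M k \<noteq> [] \<and> distinct (M k) \<and> u \<notin> set (M k) \<and> v \<notin> set (M k) \<and>
          set (M k) \<subseteq> e3c_verts r s t \<and> e3c_adj r s t u (hd (M k)) \<and> e3c_adj r s t (last (M k)) v \<and>
          successively (e3c_adj r s t) (M k) \<and> length (M k) \<le> r + t + 6"
    using assms(4) unfolding okM_def by blast
  have "good_fam r s t u v (\<lambda>k. u # M k @ [v])"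
    apply (rule build[OF assms(1-3)])
     apply (rule ok, assumption)
    apply (rule d, assumption+)
    done
  then show ?thesis by blast
qed

lemma pert_tw: "ternary_word n X \<Longrightarrow> m < 2*n \<Longrightarrow> ternary_word n (pert X m)"
  by (rule pert_tern)

lemma pert_differ': "ternary_word n X \<Longrightarrow> m < 2*n \<Longrightarrow> differ_one X (pert X m)"
  using pert_differ tw_len by metis



lemma caseI:
  assumes tA: "ternary_word r A" and tA': "ternary_word r A'" and tB: "ternary_word s B"
    and tC: "ternary_word t C" and tC': "ternary_word t C'"
    and r1: "1 \<le> r" and rs: "r \<le> s" and st: "s \<le> t" and AA: "A \<noteq> A'" and CC: "C \<noteq> C'"
  shows "\<exists>P. good_fam r s t (A,B,C,2) (A',B,C',0) P"
proof -
  define u where "u = (A,B,C,2::nat)"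
  define v where "v = (A',B,C',0::nat)"
  have lA: "length A = r" "length A' = r" using tA tA' by (simp_all add: tw_len)
  have lC: "length C = t" "length C' = t" using tC tC' by (simp_all add: tw_len)
  obtain k0 where k0: "k0 < 2*r" "pert A k0 ! (k0 div 2) = A' ! (k0 div 2)" "A ! (k0 div 2) \<noteq> A' ! (k0 div 2)"
    using good_move[OF tA tA' AA] by blast
  define i0 where "i0 = k0 div 2"
  have i0r: "i0 < r" using k0(1) unfolding i0_def by linarith
  define Ak where "Ak k = pert A k" for k
  have Ak_tw: "ternary_word r (Ak k)" if "k < 2*r" for k using pert_tw[OF tA that] by (simp add: Ak_def)
  have Ak_d: "differ_one A (Ak k)" if "k < 2*r" for k using pert_differ'[OF tA that] by (simp add: Ak_def)
  have Ak_A: "Ak k \<noteq> A" if "k < 2*r" for k using that lA by (simp add: Ak_def)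
  have Ak_inj: "Ak k \<noteq> Ak l" if "k < 2*r" "l < 2*r" "k \<noteq> l" for k l using that lA by (simp add: Ak_def)
  have Ak_i0: "Ak k ! i0 \<noteq> A' ! i0" if "k < 2*r" "k \<noteq> k0" for k
    using good_move_unique[OF lA(1) k0(1) k0(2) that] by (simp add: Ak_def i0_def)
  have Ak_A': "Ak k \<noteq> A'" if "k < 2*r" "k \<noteq> k0" for k using Ak_i0[OF that] by auto
  have N_i0: "X ! i0 = A' ! i0" if "X \<in> set (fp (Ak k0) A')" for X
    using fp_set_nth[OF _ that, of i0] k0(2) lA i0r by (auto simp: Ak_def i0_def)
  have N_Ak: "X \<noteq> Ak k" if "X \<in> set (fp (Ak k0) A')" "k < 2*r" "k \<noteq> k0" for X k
    using N_i0[OF that(1)] Ak_i0[OF that(2,3)] by auto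
  have N_A: "X \<noteq> A" if "X \<in> set (fp (Ak k0) A')" for X
    using N_i0[OF that] k0(3) unfolding i0_def by auto
  have t1: "1 \<le> t" using r1 rs st by simp
  define m0 where "m0 = (if \<exists>m<2*t. pert C' m \<in> set (fp C C') then (SOME m. m<2*t \<and> pert C' m \<in> set (fp C C')) else 0)"
  have m0t: "m0 < 2*t"
  proof (cases "\<exists>m<2*t. pert C' m \<in> set (fp C C')")
    case True then show ?thesis unfolding m0_def by (simp, metis (mono_tags, lifting) someI_ex)
  next
    case False then have "m0 = 0" unfolding m0_def by auto
    then show ?thesis using t1 by simp
  qed
  have m0u: "m = m0" if "m < 2*t" "pert C' m \<in> set (fp C C')" for m
  proof -
    have ex: "\<exists>m<2*t. pert C' m \<in> set (fp C C')" using that by blast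
    then have "m0 < 2*t \<and> pert C' m0 \<in> set (fp C C')" unfolding m0_def by (simp, metis (mono_tags, lifting) someI_ex)
    then show ?thesis using fp_pert_unique[of C C' m m0] that lC by simp
  qed
  define sw where "sw k = (if k = k0 then m0 else if k = m0 then k0 else k)" for k
  have sw_t: "sw k < 2*t" if "k < 2*r" for k using that k0(1) m0t rs st unfolding sw_def by auto
  have sw_m0: "sw k \<noteq> m0" if "k \<noteq> k0" for k using that unfolding sw_def by auto
  have sw_inj: "sw k \<noteq> sw l" if "k \<noteq> l" for k l using that unfolding sw_def by auto
  define Cq where "Cq k = pert C' (sw k)" for k
  have Cq_tw: "ternary_word t (Cq k)" if "k < 2*r" for k using pert_tw[OF tC' sw_t[OF that]] by (simp add: Cq_def)
  have Cq_d: "differ_one (Cq k) C'" if "k < 2*r" for k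
    using differ_one_sym[OF pert_differ'[OF tC' sw_t[OF that]]] by (simp add: Cq_def)
  have Cq_C': "Cq k \<noteq> C'" if "k < 2*r" for k using Cq_d[OF that] differ_one_neq by blast
  have Cq_fp: "Cq k \<notin> set (fp C C')" if "k < 2*r" "k \<noteq> k0" for k
    using m0u[OF sw_t[OF that(1)]] sw_m0[OF that(2)] by (auto simp: Cq_def)
  have Cq_C: "Cq k \<noteq> C" if "k < 2*r" "k \<noteq> k0" for k
    using Cq_fp[OF that] fp_hd[of C C'] hd_in_set[OF fp_ne] by metis
  have Cq_inj: "Cq k \<noteq> Cq l" if "k < 2*r" "l < 2*r" "k \<noteq> l" for k l
    using pert_inj'[of "sw k" C' "sw l"] sw_t[OF that(1)] sw_t[OF that(2)] sw_inj[OF that(3)] lC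
    by (simp add: Cq_def)
  have s1: "0 < 2*s" using r1 rs by simp
  define Bs where "Bs = pert B 0"
  have Bs_tw: "ternary_word s Bs" using pert_tw[OF tB s1] by (simp add: Bs_def)
  have Bs_d: "differ_one B Bs" using pert_differ'[OF tB s1] by (simp add: Bs_def)
  have Bs_B: "Bs \<noteq> B" using Bs_d differ_one_neq by metis
  note fpA = fp_tern[OF tA tA'] and fpC = fp_tern[OF tC tC']
  have fpNA: "ternary_word r X" if "X \<in> set (fp (Ak k0) A')" for X using fp_tern[OF Ak_tw[OF k0(1)] tA' that] .
  have fpGA: "ternary_word r X" if "X \<in> set (fp (Ak k) A')" "k < 2*r" for X k using fp_tern[OF Ak_tw[OF that(2)] tA' that(1)] .
  have fpGC: "ternary_word t Y" if "Y \<in> set (fp C (Cq k))" "k < 2*r" for Y k using fp_tern[OF tC Cq_tw[OF that(2)] that(1)] .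
  have lastA: "last (fp (Ak k) A') = A'" if "k < 2*r" for k
    using fp_last[of "Ak k" A'] tw_len[OF Ak_tw[OF that]] lA by simp
  have lastA0: "last (fp A A') = A'" using fp_last[of A A'] lA by simp
  have lastC0: "last (fp C C') = C'" using fp_last[of C C'] lC by simp
  have lastCq: "last (fp C (Cq k)) = Cq k" if "k < 2*r" for k
    using fp_last[of C "Cq k"] tw_len[OF Cq_tw[OF that]] lC by simp
  note bl = fp_butlast[OF _ CC, unfolded lC, OF refl]
  have fpCb: "ternary_word t Y" if "Y \<in> set (butlast (fp C C'))" for Y
    by (rule fpC[OF in_set_butlastD[OF that]])
  define MN where "MN = map (\<lambda>X. (X,B,C,2::nat)) (fp (Ak k0) A') @ map (\<lambda>Y. (A',B,Y,0::nat)) (butlast (fp C C'))"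
  define MG where "MG k = [(Ak k,B,C,2::nat)] @ map (\<lambda>Y. (Ak k,B,Y,0::nat)) (fp C (Cq k)) @
        map (\<lambda>X. (X,B,Cq k,2::nat)) (fp (Ak k) A') @ [(A',B,Cq k,0::nat)]" for k
  define ME1 where "ME1 = [(A,B,C,1::nat),(A,Bs,C,1)] @ map (\<lambda>X. (X,Bs,C,2::nat)) (fp A A') @
        map (\<lambda>Y. (A',Bs,Y,0::nat)) (fp C C') @ [(A',Bs,C',1),(A',B,C',1)]"
  define ME2 where "ME2 = map (\<lambda>Y. (A,B,Y,0::nat)) (fp C C') @ map (\<lambda>X. (X,B,C',2::nat)) (fp A A')"
  define M where "M k = (if k = k0 then MN else if k < 2*r then MG k else if k = 2*r then ME1 else ME2)" for k
  have uV: "u \<in> e3c_verts r s t" "v \<in> e3c_verts r s t" "u \<noteq> v"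
    using tA tA' tB tC tC' by (auto simp: u_def v_def mem_V)
  have okN: "okM r s t u v MN"
    unfolding okM_def
  proof (intro conjI)
    show "MN \<noteq> []" by (simp add: MN_def)
    show "distinct MN" unfolding MN_def
      using bl(6) by (auto simp: distinct_map inj_on_def fp_distinct)
    show "u \<notin> set MN" unfolding MN_def u_def using N_A by auto
    show "v \<notin> set MN" unfolding MN_def v_def using bl(5) by auto
    show "set MN \<subseteq> e3c_verts r s t" unfolding MN_def
      using fpNA fpCb tB tC tA' by (auto simp: mem_V)
    show "e3c_adj r s t u (hd MN)" unfolding MN_def u_def
      using adj_A Ak_d[OF k0(1)] Ak_tw[OF k0(1)] tA tB tC by (simp add: hd_map mem_V)
    have lb: "last (butlast (fp C C')) \<in> set (fp C C')" using in_set_butlastD[OF last_in_set[OF bl(1)]] .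
    show "e3c_adj r s t (last MN) v" unfolding MN_def v_def
      using adj_C bl(1,3) fpC[OF lb] tA' tB tC' by (simp add: last_map mem_V)
    show "successively (e3c_adj r s t) MN"
    proof -
      have j: "e3c_adj r s t (A',B,C,2) (A',B,C,0)" by (rule adj_lvl) (simp_all add: mem_V tA' tB tC)
      show ?thesis
        using segA[OF Ak_tw[OF k0(1)] tA' tB tC] segC'[OF tC tC' tA' tB CC] bl(1,2) j lastA[OF k0(1)]
        by (simp add: MN_def successively_append_iff hd_map last_map)
    qed
    show "length MN \<le> r + t + 6" unfolding MN_def
      using fp_len'[OF Ak_tw[OF k0(1)], of A'] fp_len'[OF tC, of C'] by simp
  qed
  have okG: "okM r s t u v (MG k)" if k: "k < 2*r" "k \<noteq> k0" for k
    unfolding okM_def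
  proof (intro conjI)
    note f = Ak_tw[OF k(1)] Cq_tw[OF k(1)] Ak_A[OF k(1)] Ak_A'[OF k] Cq_C[OF k] Cq_C'[OF k(1)]
    show "MG k \<noteq> []" by (simp add: MG_def)
    show "distinct (MG k)" unfolding MG_def
      using f by (auto simp: distinct_map inj_on_def fp_distinct)
    show "u \<notin> set (MG k)" unfolding MG_def u_def using f by auto
    show "v \<notin> set (MG k)" unfolding MG_def v_def using f by auto
    show "set (MG k) \<subseteq> e3c_verts r s t" unfolding MG_def
      using f fpGA[OF _ k(1)] fpGC[OF _ k(1)] tB tC tA' by (auto simp: mem_V)
    show "e3c_adj r s t u (hd (MG k))" unfolding MG_def u_def
      using adj_A Ak_d[OF k(1)] f tA tB tC by (simp add: mem_V)
    show "e3c_adj r s t (last (MG k)) v" unfolding MG_def v_def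
      using adj_C Cq_d[OF k(1)] f tA' tB tC' by (simp add: mem_V)
    show "successively (e3c_adj r s t) (MG k)"
    proof -
      have j1: "e3c_adj r s t (Ak k,B,C,2) (Ak k,B,C,0)" by (rule adj_lvl) (simp_all add: mem_V f tB tC)
      have j2: "e3c_adj r s t (Ak k,B,Cq k,0) (Ak k,B,Cq k,2)" by (rule adj_lvl) (simp_all add: mem_V f tB)
      have j3: "e3c_adj r s t (A',B,Cq k,2) (A',B,Cq k,0)" by (rule adj_lvl) (simp_all add: mem_V f tB tA')
      show ?thesis
        using segC[OF tC Cq_tw[OF k(1)] Ak_tw[OF k(1)] tB] segA[OF Ak_tw[OF k(1)] tA' tB Cq_tw[OF k(1)]]
          j1 j2 j3 lastA[OF k(1)] lastCq[OF k(1)]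
        by (simp add: MG_def successively_append_iff successively_Cons hd_map last_map)
    qed
    show "length (MG k) \<le> r + t + 6" unfolding MG_def
      using fp_len'[OF Ak_tw[OF k(1)], of A'] fp_len'[OF tC, of "Cq k"] by simp
  qed
  have okE1: "okM r s t u v ME1"
    unfolding okM_def
  proof (intro conjI)
    note f = tA tA' tB tC tC' Bs_tw Bs_B AA CC
    show "ME1 \<noteq> []" by (simp add: ME1_def)
    show "distinct ME1" unfolding ME1_def
      using f by (auto simp: distinct_map inj_on_def fp_distinct)
    show "u \<notin> set ME1" unfolding ME1_def u_def using f by auto
    show "v \<notin> set ME1" unfolding ME1_def v_def using f by auto
    show "set ME1 \<subseteq> e3c_verts r s t" unfolding ME1_def
      using f fpA fpC by (auto simp: mem_V)
    show "e3c_adj r s t u (hd ME1)" unfolding ME1_def u_def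
      by (simp, rule adj_lvl) (simp_all add: mem_V f)
    show "e3c_adj r s t (last ME1) v" unfolding ME1_def v_def
      by (simp, rule adj_lvl) (simp_all add: mem_V f)
    show "successively (e3c_adj r s t) ME1"
    proof -
      have j0: "e3c_adj r s t (A,B,C,1) (A,Bs,C,1)" by (rule adj_B) (simp_all add: mem_V f Bs_d)
      have j1: "e3c_adj r s t (A,Bs,C,1) (A,Bs,C,2)" by (rule adj_lvl) (simp_all add: mem_V f)
      have j2: "e3c_adj r s t (A',Bs,C,2) (A',Bs,C,0)" by (rule adj_lvl) (simp_all add: mem_V f)
      have j3: "e3c_adj r s t (A',Bs,C',0) (A',Bs,C',1)" by (rule adj_lvl) (simp_all add: mem_V f)
      have j4: "e3c_adj r s t (A',Bs,C',1) (A',B,C',1)" by (rule adj_B) (simp_all add: mem_V f differ_one_sym[OF Bs_d])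
      show ?thesis
        using segA[OF tA tA' Bs_tw tC] segC[OF tC tC' tA' Bs_tw] j0 j1 j2 j3 j4 lastA0 lastC0
        by (simp add: ME1_def successively_append_iff successively_Cons hd_map last_map)
    qed
    show "length ME1 \<le> r + t + 6" unfolding ME1_def
      using fp_len'[OF tA, of A'] fp_len'[OF tC, of C'] by simp
  qed
  have okE2: "okM r s t u v ME2"
    unfolding okM_def
  proof (intro conjI)
    note f = tA tA' tB tC tC' AA CC
    show "ME2 \<noteq> []" by (simp add: ME2_def)
    show "distinct ME2" unfolding ME2_def
      using f by (auto simp: distinct_map inj_on_def fp_distinct)
    show "u \<notin> set ME2" unfolding ME2_def u_def using f by auto
    show "v \<notin> set ME2" unfolding ME2_def v_def using f by auto
    show "set ME2 \<subseteq> e3c_verts r s t" unfolding ME2_def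
      using f fpA fpC by (auto simp: mem_V)
    show "e3c_adj r s t u (hd ME2)" unfolding ME2_def u_def
      by (simp add: hd_map, rule adj_lvl) (simp_all add: mem_V f)
    show "e3c_adj r s t (last ME2) v" unfolding ME2_def v_def
      by (simp add: last_map lastA0, rule adj_lvl) (simp_all add: mem_V f)
    show "successively (e3c_adj r s t) ME2"
    proof -
      have j1: "e3c_adj r s t (A,B,C',0) (A,B,C',2)" by (rule adj_lvl) (simp_all add: mem_V f)
      show ?thesis
        using segA[OF tA tA' tB tC'] segC[OF tC tC' tA tB] j1 lastC0
        by (simp add: ME2_def successively_append_iff hd_map last_map)
    qed
    show "length ME2 \<le> r + t + 6" unfolding ME2_def
      using fp_len'[OF tA, of A'] fp_len'[OF tC, of C'] by simp
  qed
  have ok: "okM r s t u v (M k)" if "k < 2*r+2" for k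
    using that okN okG okE1 okE2 unfolding M_def by (cases "k < 2*r") auto
  have dGG: "set (MG k) \<inter> set (MG l) = {}" if "k < 2*r" "l < 2*r" "k \<noteq> k0" "l \<noteq> k0" "k \<noteq> l" for k l
    using Ak_inj[OF that(1,2,5)] Ak_A'[OF that(1,3)] Ak_A'[OF that(2,4)] Cq_C[OF that(1,3)] Cq_C[OF that(2,4)]
      Cq_inj[OF that(1,2,5)] unfolding MG_def by auto
  have dGN: "set (MG k) \<inter> set MN = {}" if "k < 2*r" "k \<noteq> k0" for k
    using N_Ak[OF _ that] Ak_A'[OF that] Cq_C[OF that] Cq_fp[OF that] unfolding MG_def MN_def
    by (auto dest: in_set_butlastD)
  have dGE1: "set (MG k) \<inter> set ME1 = {}" if "k < 2*r" "k \<noteq> k0" for k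
    using Bs_B unfolding MG_def ME1_def by auto
  have dGE2: "set (MG k) \<inter> set ME2 = {}" if "k < 2*r" "k \<noteq> k0" for k
    using Ak_A[OF that(1)] CC AA Cq_C'[OF that(1)] unfolding MG_def ME2_def by auto
  have dNE1: "set MN \<inter> set ME1 = {}"
    using Bs_B unfolding MN_def ME1_def by (auto dest: in_set_butlastD)
  have dNE2: "set MN \<inter> set ME2 = {}"
    using AA CC unfolding MN_def ME2_def by (auto dest: in_set_butlastD)
  have dE12: "set ME1 \<inter> set ME2 = {}"
    using Bs_B unfolding ME1_def ME2_def by auto
  have MNk: "M k0 = MN" by (simp add: M_def)
  have MGk: "M k = MG k" if "k < 2*r" "k \<noteq> k0" for k using that by (simp add: M_def)
  have ME1k: "M (2*r) = ME1" using k0(1) by (simp add: M_def)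
  have ME2k: "M (2*r+1) = ME2" using k0(1) by (simp add: M_def)
  have d: "set (M k) \<inter> set (M l) = {}" if "k < 2*r+2" "l < 2*r+2" "k < l" for k l
  proof (cases "l < 2*r")
    case True
    then have k: "k < 2*r" using that by simp
    show ?thesis
    proof (cases "k = k0")
      case True then show ?thesis using dGN[of l] MNk MGk[of l] \<open>l < 2*r\<close> that by (auto simp: Int_commute)
    next
      case False
      show ?thesis
      proof (cases "l = k0")
        case True then show ?thesis using dGN[of k] MNk MGk[of k] k False by auto
      next
        case False2: False
        show ?thesis using dGG[of k l] MGk[of k] MGk[of l] k \<open>l < 2*r\<close> False False2 that by auto
      qed
    qed
  next
    case False
    then have l: "l = 2*r \<or> l = 2*r+1" using that by linarith
    show ?thesis
    proof (cases "k < 2*r")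
      case True
      show ?thesis
      proof (cases "k = k0")
        case True then show ?thesis using l MNk ME1k ME2k dNE1 dNE2 by auto
      next
        case False then show ?thesis using l MGk[of k] ME1k ME2k dGE1[of k] dGE2[of k] \<open>k < 2*r\<close> by auto
      qed
    next
      case False
      then have "k = 2*r" "l = 2*r+1" using that l by auto
      then show ?thesis using ME1k ME2k dE12 by simp
    qed
  qed
  have "\<exists>P. good_fam r s t u v P"
    apply (rule build2[OF uV])
     apply (rule ok, assumption)
    apply (rule d, assumption+)
    done
  then show ?thesis unfolding u_def v_def .
qed



lemma caseII:
  assumes tA: "ternary_word r A" and tA': "ternary_word r A'" and tB: "ternary_word s B"
    and tC: "ternary_word t C" and tC': "ternary_word t C'"
    and r1: "1 \<le> r" and rs: "r \<le> s" and st: "s \<le> t" and AA: "A \<noteq> A'" and CC: "C \<noteq> C'"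
  shows "\<exists>P. good_fam r s t (A,B,C,2) (A',B,C',1) P"
proof -
  define u where "u = (A,B,C,2::nat)"
  define v where "v = (A',B,C',1::nat)"
  have lA: "length A = r" "length A' = r" using tA tA' by (simp_all add: tw_len)
  have lB: "length B = s" using tB by (simp add: tw_len)
  have lC: "length C = t" "length C' = t" using tC tC' by (simp_all add: tw_len)
  obtain k0 where k0: "k0 < 2*r" "pert A k0 ! (k0 div 2) = A' ! (k0 div 2)" "A ! (k0 div 2) \<noteq> A' ! (k0 div 2)"
    using good_move[OF tA tA' AA] by blast
  define i0 where "i0 = k0 div 2"
  have i0r: "i0 < r" using k0(1) unfolding i0_def by linarith
  define Ak where "Ak k = pert A k" for k
  have Ak_tw: "ternary_word r (Ak k)" if "k < 2*r" for k using pert_tw[OF tA that] by (simp add: Ak_def)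
  have Ak_d: "differ_one A (Ak k)" if "k < 2*r" for k using pert_differ'[OF tA that] by (simp add: Ak_def)
  have Ak_A: "Ak k \<noteq> A" if "k < 2*r" for k using that lA by (simp add: Ak_def)
  have Ak_inj: "Ak k \<noteq> Ak l" if "k < 2*r" "l < 2*r" "k \<noteq> l" for k l using that lA by (simp add: Ak_def)
  have Ak_i0: "Ak k ! i0 \<noteq> A' ! i0" if "k < 2*r" "k \<noteq> k0" for k
    using good_move_unique[OF lA(1) k0(1) k0(2) that] by (simp add: Ak_def i0_def)
  have Ak_A': "Ak k \<noteq> A'" if "k < 2*r" "k \<noteq> k0" for k using Ak_i0[OF that] by auto
  have N_i0: "X ! i0 = A' ! i0" if "X \<in> set (fp (Ak k0) A')" for X
    using fp_set_nth[OF _ that, of i0] k0(2) lA i0r by (auto simp: Ak_def i0_def)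
  have N_Ak: "X \<noteq> Ak k" if "X \<in> set (fp (Ak k0) A')" "k < 2*r" "k \<noteq> k0" for X k
    using N_i0[OF that(1)] Ak_i0[OF that(2,3)] by auto
  have N_A: "X \<noteq> A" if "X \<in> set (fp (Ak k0) A')" for X
    using N_i0[OF that] k0(3) unfolding i0_def by auto
  define Bk where "Bk k = pert B k" for k
  have k2s: "k < 2*s" if "k < 2*r" for k using that rs by linarith
  have Bk_tw: "ternary_word s (Bk k)" if "k < 2*r" for k using pert_tw[OF tB k2s[OF that]] by (simp add: Bk_def)
  have Bk_d: "differ_one B (Bk k)" if "k < 2*r" for k using pert_differ'[OF tB k2s[OF that]] by (simp add: Bk_def)
  have Bk_B: "Bk k \<noteq> B" if "k < 2*r" for k using Bk_d[OF that] differ_one_neq by metis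
  have Bk_inj: "Bk k \<noteq> Bk l" if "k < 2*r" "l < 2*r" "k \<noteq> l" for k l
    using that lB k2s[OF that(1)] k2s[OF that(2)] by (simp add: Bk_def)
  note fpA = fp_tern[OF tA tA'] and fpC = fp_tern[OF tC tC']
  have fpNA: "ternary_word r X" if "X \<in> set (fp (Ak k0) A')" for X using fp_tern[OF Ak_tw[OF k0(1)] tA' that] .
  have fpGA: "ternary_word r X" if "X \<in> set (fp (Ak k) A')" "k < 2*r" for X k using fp_tern[OF Ak_tw[OF that(2)] tA' that(1)] .
  have lastA: "last (fp (Ak k) A') = A'" if "k < 2*r" for k
    using fp_last[of "Ak k" A'] tw_len[OF Ak_tw[OF that]] lA by simp
  have lastA0: "last (fp A A') = A'" using fp_last[of A A'] lA by simp
  have lastC0: "last (fp C C') = C'" using fp_last[of C C'] lC by simp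
  define MN where "MN = map (\<lambda>X. (X,B,C,2::nat)) (fp (Ak k0) A') @ map (\<lambda>Y. (A',B,Y,0::nat)) (fp C C')"
  define MG where "MG k = [(Ak k,B,C,2::nat),(Ak k,B,C,1),(Ak k,Bk k,C,1)] @ map (\<lambda>X. (X,Bk k,C,2::nat)) (fp (Ak k) A') @
        map (\<lambda>Y. (A',Bk k,Y,0::nat)) (fp C C') @ [(A',Bk k,C',1::nat)]" for k
  define ME1 where "ME1 = [(A,B,C,1::nat),(A,Bk k0,C,1)] @ map (\<lambda>X. (X,Bk k0,C,2::nat)) (fp A A') @
        map (\<lambda>Y. (A',Bk k0,Y,0::nat)) (fp C C') @ [(A',Bk k0,C',1)]"
  define ME2 where "ME2 = map (\<lambda>Y. (A,B,Y,0::nat)) (fp C C') @ map (\<lambda>X. (X,B,C',2::nat)) (fp A A')"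
  define M where "M k = (if k = k0 then MN else if k < 2*r then MG k else if k = 2*r then ME1 else ME2)" for k
  have uV: "u \<in> e3c_verts r s t" "v \<in> e3c_verts r s t" "u \<noteq> v"
    using tA tA' tB tC tC' by (auto simp: u_def v_def mem_V)
  have okN: "okM r s t u v MN"
    unfolding okM_def
  proof (intro conjI)
    show "MN \<noteq> []" by (simp add: MN_def)
    show "distinct MN" unfolding MN_def
      by (auto simp: distinct_map inj_on_def fp_distinct)
    show "u \<notin> set MN" unfolding MN_def u_def using N_A by auto
    show "v \<notin> set MN" unfolding MN_def v_def by auto
    show "set MN \<subseteq> e3c_verts r s t" unfolding MN_def
      using fpNA fpC tB tC tA' by (auto simp: mem_V)
    show "e3c_adj r s t u (hd MN)" unfolding MN_def u_def
      using adj_A Ak_d[OF k0(1)] Ak_tw[OF k0(1)] tA tB tC by (simp add: hd_map mem_V)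
    show "e3c_adj r s t (last MN) v" unfolding MN_def v_def
      by (simp add: last_map lastC0, rule adj_lvl) (simp_all add: mem_V tA' tB tC')
    show "successively (e3c_adj r s t) MN"
    proof -
      have j: "e3c_adj r s t (A',B,C,2) (A',B,C,0)" by (rule adj_lvl) (simp_all add: mem_V tA' tB tC)
      show ?thesis
        using segA[OF Ak_tw[OF k0(1)] tA' tB tC] segC[OF tC tC' tA' tB] j lastA[OF k0(1)]
        by (simp add: MN_def successively_append_iff hd_map last_map)
    qed
    show "length MN \<le> r + t + 6" unfolding MN_def
      using fp_len'[OF Ak_tw[OF k0(1)], of A'] fp_len'[OF tC, of C'] by simp
  qed
  have okG: "okM r s t u v (MG k)" if k: "k < 2*r" "k \<noteq> k0" for k
    unfolding okM_def
  proof (intro conjI)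
    note f = Ak_tw[OF k(1)] Bk_tw[OF k(1)] Ak_A[OF k(1)] Ak_A'[OF k] Bk_B[OF k(1)] CC AA tA tA' tB tC tC'
    show "MG k \<noteq> []" by (simp add: MG_def)
    show "distinct (MG k)" unfolding MG_def
      using f by (auto simp: distinct_map inj_on_def fp_distinct)
    show "u \<notin> set (MG k)" unfolding MG_def u_def using f by auto
    show "v \<notin> set (MG k)" unfolding MG_def v_def using f by auto
    show "set (MG k) \<subseteq> e3c_verts r s t" unfolding MG_def
      using f fpGA[OF _ k(1)] fpC by (auto simp: mem_V)
    show "e3c_adj r s t u (hd (MG k))" unfolding MG_def u_def
      using adj_A Ak_d[OF k(1)] f by (simp add: mem_V)
    show "e3c_adj r s t (last (MG k)) v" unfolding MG_def v_def
      using adj_B differ_one_sym[OF Bk_d[OF k(1)]] f by (simp add: mem_V)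
    show "successively (e3c_adj r s t) (MG k)"
    proof -
      have j1: "e3c_adj r s t (Ak k,B,C,2) (Ak k,B,C,1)" by (rule adj_lvl) (simp_all add: mem_V f)
      have j2: "e3c_adj r s t (Ak k,B,C,1) (Ak k,Bk k,C,1)" by (rule adj_B) (simp_all add: mem_V f Bk_d[OF k(1)])
      have j3: "e3c_adj r s t (Ak k,Bk k,C,1) (Ak k,Bk k,C,2)" by (rule adj_lvl) (simp_all add: mem_V f)
      have j4: "e3c_adj r s t (A',Bk k,C,2) (A',Bk k,C,0)" by (rule adj_lvl) (simp_all add: mem_V f)
      have j5: "e3c_adj r s t (A',Bk k,C',0) (A',Bk k,C',1)" by (rule adj_lvl) (simp_all add: mem_V f)
      show ?thesis
        using segA[OF Ak_tw[OF k(1)] tA' Bk_tw[OF k(1)] tC] segC[OF tC tC' tA' Bk_tw[OF k(1)]]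
          j1 j2 j3 j4 j5 lastA[OF k(1)] lastC0
        by (simp add: MG_def successively_append_iff successively_Cons hd_map last_map)
    qed
    show "length (MG k) \<le> r + t + 6" unfolding MG_def
      using fp_len'[OF Ak_tw[OF k(1)], of A'] fp_len'[OF tC, of C'] by simp
  qed
  have okE1: "okM r s t u v ME1"
    unfolding okM_def
  proof (intro conjI)
    note f = tA tA' tB tC tC' Bk_tw[OF k0(1)] Bk_B[OF k0(1)] AA CC
    show "ME1 \<noteq> []" by (simp add: ME1_def)
    show "distinct ME1" unfolding ME1_def
      using f by (auto simp: distinct_map inj_on_def fp_distinct)
    show "u \<notin> set ME1" unfolding ME1_def u_def using f by auto
    show "v \<notin> set ME1" unfolding ME1_def v_def using f by auto
    show "set ME1 \<subseteq> e3c_verts r s t" unfolding ME1_def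
      using f fpA fpC by (auto simp: mem_V)
    show "e3c_adj r s t u (hd ME1)" unfolding ME1_def u_def
      by (simp, rule adj_lvl) (simp_all add: mem_V f)
    show "e3c_adj r s t (last ME1) v" unfolding ME1_def v_def
      using adj_B differ_one_sym[OF Bk_d[OF k0(1)]] f by (simp add: mem_V)
    show "successively (e3c_adj r s t) ME1"
    proof -
      have j0: "e3c_adj r s t (A,B,C,1) (A,Bk k0,C,1)" by (rule adj_B) (simp_all add: mem_V f Bk_d[OF k0(1)])
      have j1: "e3c_adj r s t (A,Bk k0,C,1) (A,Bk k0,C,2)" by (rule adj_lvl) (simp_all add: mem_V f)
      have j2: "e3c_adj r s t (A',Bk k0,C,2) (A',Bk k0,C,0)" by (rule adj_lvl) (simp_all add: mem_V f)
      have j3: "e3c_adj r s t (A',Bk k0,C',0) (A',Bk k0,C',1)" by (rule adj_lvl) (simp_all add: mem_V f)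
      show ?thesis
        using segA[OF tA tA' Bk_tw[OF k0(1)] tC] segC[OF tC tC' tA' Bk_tw[OF k0(1)]] j0 j1 j2 j3 lastA0 lastC0
        by (simp add: ME1_def successively_append_iff successively_Cons hd_map last_map)
    qed
    show "length ME1 \<le> r + t + 6" unfolding ME1_def
      using fp_len'[OF tA, of A'] fp_len'[OF tC, of C'] by simp
  qed
  have okE2: "okM r s t u v ME2"
    unfolding okM_def
  proof (intro conjI)
    note f = tA tA' tB tC tC' AA CC
    show "ME2 \<noteq> []" by (simp add: ME2_def)
    show "distinct ME2" unfolding ME2_def
      using f by (auto simp: distinct_map inj_on_def fp_distinct)
    show "u \<notin> set ME2" unfolding ME2_def u_def using f by auto
    show "v \<notin> set ME2" unfolding ME2_def v_def using f by auto
    show "set ME2 \<subseteq> e3c_verts r s t" unfolding ME2_def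
      using f fpA fpC by (auto simp: mem_V)
    show "e3c_adj r s t u (hd ME2)" unfolding ME2_def u_def
      by (simp add: hd_map, rule adj_lvl) (simp_all add: mem_V f)
    show "e3c_adj r s t (last ME2) v" unfolding ME2_def v_def
      by (simp add: last_map lastA0, rule adj_lvl) (simp_all add: mem_V f)
    show "successively (e3c_adj r s t) ME2"
    proof -
      have j1: "e3c_adj r s t (A,B,C',0) (A,B,C',2)" by (rule adj_lvl) (simp_all add: mem_V f)
      show ?thesis
        using segA[OF tA tA' tB tC'] segC[OF tC tC' tA tB] j1 lastC0
        by (simp add: ME2_def successively_append_iff hd_map last_map)
    qed
    show "length ME2 \<le> r + t + 6" unfolding ME2_def
      using fp_len'[OF tA, of A'] fp_len'[OF tC, of C'] by simp
  qed
  have ok: "okM r s t u v (M k)" if "k < 2*r+2" for k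
    using that okN okG okE1 okE2 unfolding M_def by (cases "k < 2*r") auto
  have dGG: "set (MG k) \<inter> set (MG l) = {}" if "k < 2*r" "l < 2*r" "k \<noteq> k0" "l \<noteq> k0" "k \<noteq> l" for k l
    using Ak_inj[OF that(1,2,5)] Bk_inj[OF that(1,2,5)] Bk_B[OF that(1)] Bk_B[OF that(2)]
    unfolding MG_def by auto
  have dGN: "set (MG k) \<inter> set MN = {}" if "k < 2*r" "k \<noteq> k0" for k
    using N_Ak[OF _ that] Bk_B[OF that(1)] unfolding MG_def MN_def by auto
  have dGE1: "set (MG k) \<inter> set ME1 = {}" if "k < 2*r" "k \<noteq> k0" for k
    using Ak_A[OF that(1)] Bk_inj[OF that(1) k0(1) that(2)] Bk_B[OF that(1)] Bk_B[OF k0(1)]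
    unfolding MG_def ME1_def by auto
  have dGE2: "set (MG k) \<inter> set ME2 = {}" if "k < 2*r" "k \<noteq> k0" for k
    using CC Bk_B[OF that(1)] unfolding MG_def ME2_def by auto
  have dNE1: "set MN \<inter> set ME1 = {}"
    using Bk_B[OF k0(1)] unfolding MN_def ME1_def by auto
  have dNE2: "set MN \<inter> set ME2 = {}"
    using AA CC unfolding MN_def ME2_def by auto
  have dE12: "set ME1 \<inter> set ME2 = {}"
    using Bk_B[OF k0(1)] unfolding ME1_def ME2_def by auto
  have MNk: "M k0 = MN" by (simp add: M_def)
  have MGk: "M k = MG k" if "k < 2*r" "k \<noteq> k0" for k using that by (simp add: M_def)
  have ME1k: "M (2*r) = ME1" using k0(1) by (simp add: M_def)
  have ME2k: "M (2*r+1) = ME2" using k0(1) by (simp add: M_def)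
  have d: "set (M k) \<inter> set (M l) = {}" if "k < 2*r+2" "l < 2*r+2" "k < l" for k l
  proof (cases "l < 2*r")
    case True
    then have k: "k < 2*r" using that by simp
    show ?thesis
    proof (cases "k = k0")
      case True then show ?thesis using dGN[of l] MNk MGk[of l] \<open>l < 2*r\<close> that by (auto simp: Int_commute)
    next
      case False
      show ?thesis
      proof (cases "l = k0")
        case True then show ?thesis using dGN[of k] MNk MGk[of k] k False by auto
      next
        case False2: False
        show ?thesis using dGG[of k l] MGk[of k] MGk[of l] k \<open>l < 2*r\<close> False False2 that by auto
      qed
    qed
  next
    case False
    then have l: "l = 2*r \<or> l = 2*r+1" using that by linarith
    show ?thesis
    proof (cases "k < 2*r")
      case True
      show ?thesis
      proof (cases "k = k0")
        case True then show ?thesis using l MNk ME1k ME2k dNE1 dNE2 by auto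
      next
        case False then show ?thesis using l MGk[of k] ME1k ME2k dGE1[of k] dGE2[of k] \<open>k < 2*r\<close> by auto
      qed
    next
      case False
      then have "k = 2*r" "l = 2*r+1" using that l by auto
      then show ?thesis using ME1k ME2k dE12 by simp
    qed
  qed
  have "\<exists>P. good_fam r s t u v P"
    apply (rule build2[OF uV])
     apply (rule ok, assumption)
    apply (rule d, assumption+)
    done
  then show ?thesis unfolding u_def v_def .
qed



lemma caseIII:
  assumes tA: "ternary_word r A" and tA': "ternary_word r A'" and tB: "ternary_word s B"
    and tC: "ternary_word t C" and tC': "ternary_word t C'"
    and r1: "1 \<le> r" and rs: "r \<le> s" and st: "s \<le> t" and AA: "A \<noteq> A'" and CC: "C \<noteq> C'"
  shows "\<exists>P. good_fam r s t (A,B,C,1) (A',B,C',0) P"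
proof -
  define u where "u = (A,B,C,1::nat)"
  define v where "v = (A',B,C',0::nat)"
  have lA: "length A = r" "length A' = r" using tA tA' by (simp_all add: tw_len)
  have lB: "length B = s" using tB by (simp add: tw_len)
  have lC: "length C = t" "length C' = t" using tC tC' by (simp_all add: tw_len)
  have r0: "0 < 2*r" using r1 by simp
  have t1: "1 \<le> t" using r1 rs st by simp
  define m0 where "m0 = (if \<exists>m<2*t. pert C' m \<in> set (fp C C') then (SOME m. m<2*t \<and> pert C' m \<in> set (fp C C')) else 0)"
  have m0t: "m0 < 2*t"
  proof (cases "\<exists>m<2*t. pert C' m \<in> set (fp C C')")
    case True then show ?thesis unfolding m0_def by (simp, metis (mono_tags, lifting) someI_ex)
  next
    case False then have "m0 = 0" unfolding m0_def by auto
    then show ?thesis using t1 by simp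
  qed
  have m0u: "m = m0" if "m < 2*t" "pert C' m \<in> set (fp C C')" for m
  proof -
    have ex: "\<exists>m<2*t. pert C' m \<in> set (fp C C')" using that by blast
    then have "m0 < 2*t \<and> pert C' m0 \<in> set (fp C C')" unfolding m0_def by (simp, metis (mono_tags, lifting) someI_ex)
    then show ?thesis using fp_pert_unique[of C C' m m0] that lC by simp
  qed
  define sw where "sw k = (if k = 0 then m0 else if k = m0 then 0 else k)" for k
  have sw_t: "sw k < 2*t" if "k < 2*r" for k using that m0t rs st unfolding sw_def by auto
  have sw_m0: "sw k \<noteq> m0" if "k \<noteq> 0" for k using that unfolding sw_def by auto
  have sw_inj: "sw k \<noteq> sw l" if "k \<noteq> l" for k l using that unfolding sw_def by auto
  define Cq where "Cq k = pert C' (sw k)" for k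
  have Cq_tw: "ternary_word t (Cq k)" if "k < 2*r" for k using pert_tw[OF tC' sw_t[OF that]] by (simp add: Cq_def)
  have Cq_d: "differ_one (Cq k) C'" if "k < 2*r" for k
    using differ_one_sym[OF pert_differ'[OF tC' sw_t[OF that]]] by (simp add: Cq_def)
  have Cq_C': "Cq k \<noteq> C'" if "k < 2*r" for k using Cq_d[OF that] differ_one_neq by blast
  have Cq_fp: "Cq k \<notin> set (fp C C')" if "k < 2*r" "k \<noteq> 0" for k
    using m0u[OF sw_t[OF that(1)]] sw_m0[OF that(2)] by (auto simp: Cq_def)
  have Cq_inj: "Cq k \<noteq> Cq l" if "k < 2*r" "l < 2*r" "k \<noteq> l" for k l
    using pert_inj'[of "sw k" C' "sw l"] sw_t[OF that(1)] sw_t[OF that(2)] sw_inj[OF that(3)] lC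
    by (simp add: Cq_def)
  define Bk where "Bk k = pert B k" for k
  have k2s: "k < 2*s" if "k < 2*r" for k using that rs by linarith
  have Bk_tw: "ternary_word s (Bk k)" if "k < 2*r" for k using pert_tw[OF tB k2s[OF that]] by (simp add: Bk_def)
  have Bk_d: "differ_one B (Bk k)" if "k < 2*r" for k using pert_differ'[OF tB k2s[OF that]] by (simp add: Bk_def)
  have Bk_B: "Bk k \<noteq> B" if "k < 2*r" for k using Bk_d[OF that] differ_one_neq by metis
  have Bk_inj: "Bk k \<noteq> Bk l" if "k < 2*r" "l < 2*r" "k \<noteq> l" for k l
    using that lB k2s[OF that(1)] k2s[OF that(2)] by (simp add: Bk_def)
  note fpA = fp_tern[OF tA tA'] and fpC = fp_tern[OF tC tC']
  have fpGC: "ternary_word t Y" if "Y \<in> set (fp C (Cq k))" "k < 2*r" for Y k using fp_tern[OF tC Cq_tw[OF that(2)] that(1)] .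
  have lastA0: "last (fp A A') = A'" using fp_last[of A A'] lA by simp
  have lastC0: "last (fp C C') = C'" using fp_last[of C C'] lC by simp
  have lastCq: "last (fp C (Cq k)) = Cq k" if "k < 2*r" for k
    using fp_last[of C "Cq k"] tw_len[OF Cq_tw[OF that]] lC by simp
  note bl = fp_butlast[OF _ CC, unfolded lC, OF refl]
  have fpCb: "ternary_word t Y" if "Y \<in> set (butlast (fp C C'))" for Y
    by (rule fpC[OF in_set_butlastD[OF that]])
  define MK where "MK = [(A,Bk 0,C,1::nat)] @ map (\<lambda>X. (X,Bk 0,C,2::nat)) (fp A A') @
        map (\<lambda>Y. (A',Bk 0,Y,0::nat)) (fp C C') @ [(A',Bk 0,C',1::nat),(A',B,C',1)]"
  define MG where "MG k = [(A,Bk k,C,1::nat)] @ map (\<lambda>X. (X,Bk k,C,2::nat)) (fp A A') @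
        map (\<lambda>Y. (A',Bk k,Y,0::nat)) (fp C (Cq k)) @ [(A',Bk k,Cq k,1::nat),(A',B,Cq k,1),(A',B,Cq k,0)]" for k
  define MEb where "MEb = map (\<lambda>X. (X,B,C,2::nat)) (fp A A') @ map (\<lambda>Y. (A',B,Y,0::nat)) (butlast (fp C C'))"
  define MEa where "MEa = map (\<lambda>Y. (A,B,Y,0::nat)) (fp C C') @ map (\<lambda>X. (X,B,C',2::nat)) (fp A A')"
  define M where "M k = (if k = 0 then MK else if k < 2*r then MG k else if k = 2*r then MEb else MEa)" for k
  have uV: "u \<in> e3c_verts r s t" "v \<in> e3c_verts r s t" "u \<noteq> v"
    using tA tA' tB tC tC' by (auto simp: u_def v_def mem_V)
  have okK: "okM r s t u v MK"
    unfolding okM_def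
  proof (intro conjI)
    note f = tA tA' tB tC tC' Bk_tw[OF r0] Bk_B[OF r0] AA CC
    show "MK \<noteq> []" by (simp add: MK_def)
    show "distinct MK" unfolding MK_def
      using f by (auto simp: distinct_map inj_on_def fp_distinct)
    show "u \<notin> set MK" unfolding MK_def u_def using f by auto
    show "v \<notin> set MK" unfolding MK_def v_def using f by auto
    show "set MK \<subseteq> e3c_verts r s t" unfolding MK_def
      using f fpA fpC by (auto simp: mem_V)
    have "hd MK = (A,Bk 0,C,1)" by (simp add: MK_def)
    then show "e3c_adj r s t u (hd MK)" unfolding u_def
      by (simp only:, intro adj_B) (simp_all add: mem_V f Bk_d[OF r0])
    show "e3c_adj r s t (last MK) v" unfolding MK_def v_def
      by (simp, rule adj_lvl) (simp_all add: mem_V f)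
    show "successively (e3c_adj r s t) MK"
    proof -
      have j1: "e3c_adj r s t (A,Bk 0,C,1) (A,Bk 0,C,2)" by (rule adj_lvl) (simp_all add: mem_V f)
      have j2: "e3c_adj r s t (A',Bk 0,C,2) (A',Bk 0,C,0)" by (rule adj_lvl) (simp_all add: mem_V f)
      have j3: "e3c_adj r s t (A',Bk 0,C',0) (A',Bk 0,C',1)" by (rule adj_lvl) (simp_all add: mem_V f)
      have j4: "e3c_adj r s t (A',Bk 0,C',1) (A',B,C',1)" by (rule adj_B) (simp_all add: mem_V f differ_one_sym[OF Bk_d[OF r0]])
      show ?thesis
        using segA[OF tA tA' Bk_tw[OF r0] tC] segC[OF tC tC' tA' Bk_tw[OF r0]] j1 j2 j3 j4 lastA0 lastC0
        by (simp add: MK_def successively_append_iff successively_Cons hd_map last_map)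
    qed
    show "length MK \<le> r + t + 6" unfolding MK_def
      using fp_len'[OF tA, of A'] fp_len'[OF tC, of C'] by simp
  qed
  have okG: "okM r s t u v (MG k)" if k: "k < 2*r" "k \<noteq> 0" for k
    unfolding okM_def
  proof (intro conjI)
    note f = Bk_tw[OF k(1)] Cq_tw[OF k(1)] Bk_B[OF k(1)] Cq_C'[OF k(1)] tA tA' tB tC tC' AA CC
    show "MG k \<noteq> []" by (simp add: MG_def)
    show "distinct (MG k)" unfolding MG_def
      using f by (auto simp: distinct_map inj_on_def fp_distinct)
    show "u \<notin> set (MG k)" unfolding MG_def u_def using f by auto
    show "v \<notin> set (MG k)" unfolding MG_def v_def using f by auto
    show "set (MG k) \<subseteq> e3c_verts r s t" unfolding MG_def
      using f fpA fpGC[OF _ k(1)] by (auto simp: mem_V)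
    have "hd (MG k) = (A,Bk k,C,1)" by (simp add: MG_def)
    then show "e3c_adj r s t u (hd (MG k))" unfolding u_def
      by (simp only:, intro adj_B) (simp_all add: mem_V f Bk_d[OF k(1)])
    show "e3c_adj r s t (last (MG k)) v" unfolding MG_def v_def
      using adj_C Cq_d[OF k(1)] f by (simp add: mem_V)
    show "successively (e3c_adj r s t) (MG k)"
    proof -
      have j1: "e3c_adj r s t (A,Bk k,C,1) (A,Bk k,C,2)" by (rule adj_lvl) (simp_all add: mem_V f)
      have j2: "e3c_adj r s t (A',Bk k,C,2) (A',Bk k,C,0)" by (rule adj_lvl) (simp_all add: mem_V f)
      have j3: "e3c_adj r s t (A',Bk k,Cq k,0) (A',Bk k,Cq k,1)" by (rule adj_lvl) (simp_all add: mem_V f)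
      have j4: "e3c_adj r s t (A',Bk k,Cq k,1) (A',B,Cq k,1)" by (rule adj_B) (simp_all add: mem_V f differ_one_sym[OF Bk_d[OF k(1)]])
      have j5: "e3c_adj r s t (A',B,Cq k,1) (A',B,Cq k,0)" by (rule adj_lvl) (simp_all add: mem_V f)
      show ?thesis
        using segA[OF tA tA' Bk_tw[OF k(1)] tC] segC[OF tC Cq_tw[OF k(1)] tA' Bk_tw[OF k(1)]]
          j1 j2 j3 j4 j5 lastA0 lastCq[OF k(1)]
        by (simp add: MG_def successively_append_iff successively_Cons hd_map last_map)
    qed
    show "length (MG k) \<le> r + t + 6" unfolding MG_def
      using fp_len'[OF tA, of A'] fp_len'[OF tC, of "Cq k"] by simp
  qed
  have okEb: "okM r s t u v MEb"
    unfolding okM_def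
  proof (intro conjI)
    note f = tA tA' tB tC tC' AA CC
    show "MEb \<noteq> []" by (simp add: MEb_def)
    show "distinct MEb" unfolding MEb_def
      using bl(6) by (auto simp: distinct_map inj_on_def fp_distinct)
    show "u \<notin> set MEb" unfolding MEb_def u_def by auto
    show "v \<notin> set MEb" unfolding MEb_def v_def using bl(5) by auto
    show "set MEb \<subseteq> e3c_verts r s t" unfolding MEb_def
      using f fpA fpCb by (auto simp: mem_V)
    show "e3c_adj r s t u (hd MEb)" unfolding MEb_def u_def
      by (simp add: hd_map, rule adj_lvl) (simp_all add: mem_V f)
    have lb: "last (butlast (fp C C')) \<in> set (fp C C')" using in_set_butlastD[OF last_in_set[OF bl(1)]] .
    show "e3c_adj r s t (last MEb) v" unfolding MEb_def v_def
      using adj_C bl(1,3) fpC[OF lb] tA' tB tC' by (simp add: last_map mem_V)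
    show "successively (e3c_adj r s t) MEb"
    proof -
      have j: "e3c_adj r s t (A',B,C,2) (A',B,C,0)" by (rule adj_lvl) (simp_all add: mem_V tA' tB tC)
      show ?thesis
        using segA[OF tA tA' tB tC] segC'[OF tC tC' tA' tB CC] bl(1,2) j lastA0
        by (simp add: MEb_def successively_append_iff hd_map last_map)
    qed
    show "length MEb \<le> r + t + 6" unfolding MEb_def
      using fp_len'[OF tA, of A'] fp_len'[OF tC, of C'] by simp
  qed
  have okEa: "okM r s t u v MEa"
    unfolding okM_def
  proof (intro conjI)
    note f = tA tA' tB tC tC' AA CC
    show "MEa \<noteq> []" by (simp add: MEa_def)
    show "distinct MEa" unfolding MEa_def
      using f by (auto simp: distinct_map inj_on_def fp_distinct)
    show "u \<notin> set MEa" unfolding MEa_def u_def using f by auto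
    show "v \<notin> set MEa" unfolding MEa_def v_def using f by auto
    show "set MEa \<subseteq> e3c_verts r s t" unfolding MEa_def
      using f fpA fpC by (auto simp: mem_V)
    show "e3c_adj r s t u (hd MEa)" unfolding MEa_def u_def
      by (simp add: hd_map, rule adj_lvl) (simp_all add: mem_V f)
    show "e3c_adj r s t (last MEa) v" unfolding MEa_def v_def
      by (simp add: last_map lastA0, rule adj_lvl) (simp_all add: mem_V f)
    show "successively (e3c_adj r s t) MEa"
    proof -
      have j1: "e3c_adj r s t (A,B,C',0) (A,B,C',2)" by (rule adj_lvl) (simp_all add: mem_V f)
      show ?thesis
        using segA[OF tA tA' tB tC'] segC[OF tC tC' tA tB] j1 lastC0
        by (simp add: MEa_def successively_append_iff hd_map last_map)
    qed
    show "length MEa \<le> r + t + 6" unfolding MEa_def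
      using fp_len'[OF tA, of A'] fp_len'[OF tC, of C'] by simp
  qed
  have ok: "okM r s t u v (M k)" if "k < 2*r+2" for k
    using that okK okG okEb okEa unfolding M_def by (cases "k < 2*r") auto
  have dGG: "set (MG k) \<inter> set (MG l) = {}" if "k < 2*r" "l < 2*r" "k \<noteq> 0" "l \<noteq> 0" "k \<noteq> l" for k l
    using Bk_inj[OF that(1,2,5)] Bk_B[OF that(1)] Bk_B[OF that(2)] Cq_inj[OF that(1,2,5)]
    unfolding MG_def by auto
  have dGK: "set (MG k) \<inter> set MK = {}" if "k < 2*r" "k \<noteq> 0" for k
    using Bk_inj[OF that(1) r0 that(2)] Bk_B[OF that(1)] Bk_B[OF r0] Cq_C'[OF that(1)]
    unfolding MG_def MK_def by auto
  have dGEb: "set (MG k) \<inter> set MEb = {}" if "k < 2*r" "k \<noteq> 0" for k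
    using Bk_B[OF that(1)] Cq_fp[OF that] unfolding MG_def MEb_def by (auto dest: in_set_butlastD)
  have dGEa: "set (MG k) \<inter> set MEa = {}" if "k < 2*r" "k \<noteq> 0" for k
    using AA Bk_B[OF that(1)] unfolding MG_def MEa_def by auto
  have dKEb: "set MK \<inter> set MEb = {}"
    using Bk_B[OF r0] unfolding MK_def MEb_def by (auto dest: in_set_butlastD)
  have dKEa: "set MK \<inter> set MEa = {}"
    using Bk_B[OF r0] unfolding MK_def MEa_def by auto
  have dEba: "set MEb \<inter> set MEa = {}"
    using AA CC unfolding MEb_def MEa_def by (auto dest: in_set_butlastD)
  have MKk: "M 0 = MK" by (simp add: M_def)
  have MGk: "M k = MG k" if "k < 2*r" "k \<noteq> 0" for k using that by (simp add: M_def)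
  have MEbk: "M (2*r) = MEb" using r0 by (simp add: M_def)
  have MEak: "M (2*r+1) = MEa" using r0 by (simp add: M_def)
  have d: "set (M k) \<inter> set (M l) = {}" if "k < 2*r+2" "l < 2*r+2" "k < l" for k l
  proof (cases "l < 2*r")
    case True
    then have k: "k < 2*r" using that by simp
    have l0: "l \<noteq> 0" using that by simp
    show ?thesis
    proof (cases "k = 0")
      case True then show ?thesis using dGK[of l] MKk MGk[of l] \<open>l < 2*r\<close> l0 by (auto simp: Int_commute)
    next
      case False
      show ?thesis using dGG[of k l] MGk[of k] MGk[of l] k \<open>l < 2*r\<close> False l0 that by auto
    qed
  next
    case False
    then have l: "l = 2*r \<or> l = 2*r+1" using that by linarith
    show ?thesis
    proof (cases "k < 2*r")
      case True
      show ?thesis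
      proof (cases "k = 0")
        case True then show ?thesis using l MKk MEbk MEak dKEb dKEa by auto
      next
        case False then show ?thesis using l MGk[of k] MEbk MEak dGEb[of k] dGEa[of k] \<open>k < 2*r\<close> by auto
      qed
    next
      case False
      then have "k = 2*r" "l = 2*r+1" using that l by auto
      then show ?thesis using MEbk MEak dEba by simp
    qed
  qed
  have "\<exists>P. good_fam r s t u v P"
    apply (rule build2[OF uV])
     apply (rule ok, assumption)
    apply (rule d, assumption+)
    done
  then show ?thesis unfolding u_def v_def .
qed


theorem lemma19:
  fixes r s t :: nat and A B C A' B' C' :: "nat list" and d d' :: nat
  assumes "1 \<le> r" "r \<le> s" "s \<le> t"
    and "(A,B,C,d) \<in> e3c_verts r s t" "(A',B',C',d') \<in> e3c_verts r s t"
    and "A \<noteq> A'" "B = B'" "C \<noteq> C'" "d \<noteq> d'"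
  shows "\<exists>P :: nat \<Rightarrow> e3c_vertex list.
     (\<forall>i < 2*r+2. e3c_path r s t (A,B,C,d) (A',B',C',d') (P i) \<and> path_len (P i) \<le> r + t + 7) \<and>
     (\<forall>i < 2*r+2. \<forall>j < 2*r+2. i \<noteq> j \<longrightarrow> interior (P i) \<inter> interior (P j) = {} \<and> P i \<noteq> P j)"
proof -
  have tw: "ternary_word r A" "ternary_word r A'" "ternary_word s B" "ternary_word t C" "ternary_word t C'"
    "d \<in> {0,1,2}" "d' \<in> {0,1,2}"
    using assms(4,5,7) by (auto simp: mem_V)
  note cI = caseI[OF tw(1-5) assms(1-3,6,8)] and cII = caseII[OF tw(1-5) assms(1-3,6,8)]
    and cIII = caseIII[OF tw(1-5) assms(1-3,6,8)]
  note rI = caseI[OF tw(2,1,3,5,4) assms(1-3) not_sym[OF assms(6)] not_sym[OF assms(8)]]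
  note rII = caseII[OF tw(2,1,3,5,4) assms(1-3) not_sym[OF assms(6)] not_sym[OF assms(8)]]
  note rIII = caseIII[OF tw(2,1,3,5,4) assms(1-3) not_sym[OF assms(6)] not_sym[OF assms(8)]]
  have "\<exists>P. good_fam r s t (A,B,C,d) (A',B,C',d') P"
  proof -
    consider "d = 2" "d' = 0" | "d = 0" "d' = 2" | "d = 2" "d' = 1" | "d = 1" "d' = 2"
      | "d = 1" "d' = 0" | "d = 0" "d' = 1"
      using tw(6,7) assms(9) by auto
    then show ?thesis
    proof cases
      case 1 then show ?thesis using cI by simp
    next
      case 2 then show ?thesis using rI good_fam_rev by fastforce
    next
      case 3 then show ?thesis using cII by simp
    next
      case 4 then show ?thesis using rII good_fam_rev by fastforce
    next
      case 5 then show ?thesis using cIII by simp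
    next
      case 6 then show ?thesis using rIII good_fam_rev by fastforce
    qed
  qed
  then show ?thesis using assms(7) unfolding good_fam_def by simp
qed

end
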